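(* Let $H$ be a finite-dimensional real Hilbert space, $C\subset H$ a nonempty closed convex set, and $A,F:H\to H$ Lipschitz continuous operators with Lipschitz constants $L_A$ and $L_F$, respectively. Assume the couple $(A,F)$ is $\gamma$-strongly monotone for some $\gamma>0$. Then: (i) $A$ and $F$ are bijective and have Lipschitz continuous inverses; moreover, for all $u,v\in H$, $$\frac{1}{L_F}\|u-v\|\le\|F^{-1}u-F^{-1}v\|\le\frac{L_A}{\gamma}\|u-v\|,\qquad \frac{1}{L_A}\|u-v\|\le\|A^{-1}u-A^{-1}v\|\le\frac{L_F}{\gamma}\|u-v\|.$$ (ii) $\mathrm{GVI}(A,F,C)$ admits a unique solution. Moreover, $x^*$ is a solution of $\mathrm{GVI}(A,F,C)$ if and only if $u^*:=Fx^*$ is a solution of the variational inequality $\mathrm{VI}(AF^{-1},C)$, and if and only if $v^*:=Ax^*$ is a solution of the inverse variational inequality $\mathrm{IVI}(FA^{-1},C)$.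
   Context: $\mathrm{GVI}(A,F,C)$: find $x^*\in H$ with $Fx^*\in C$ and $\langle Ax^*,y-Fx^*\rangle\ge0$ for all $y\in C$. $\mathrm{VI}(G,C)$: find $x^*\in C$ with $\langle Gx^*,y-x^*\rangle\ge0$ for all $y\in C$. $\mathrm{IVI}(B,C)$: find $x^*\in H$ with $Bx^*\in C$ and $\langle x^*,y-Bx^*\rangle\ge0$ for all $y\in C$. The couple $(A,F)$ is $\gamma$-strongly monotone if $\langle Ax-Ay,Fx-Fy\rangle\ge\gamma\|x-y\|^2$ for all $x,y\in H$. *)

theory Defs
  imports "HOL-Analysis.Analysis"
begin

definition GVI_sol :: "('a::real_inner \<Rightarrow> 'a) \<Rightarrow> ('a \<Rightarrow> 'a) \<Rightarrow> 'a set \<Rightarrow> 'a \<Rightarrow> bool" where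
  "GVI_sol A F C x \<longleftrightarrow> F x \<in> C \<and> (\<forall>y\<in>C. inner (A x) (y - F x) \<ge> 0)"

definition VI_sol :: "('a::real_inner \<Rightarrow> 'a) \<Rightarrow> 'a set \<Rightarrow> 'a \<Rightarrow> bool" where
  "VI_sol G C x \<longleftrightarrow> x \<in> C \<and> (\<forall>y\<in>C. inner (G x) (y - x) \<ge> 0)"

definition IVI_sol :: "('a::real_inner \<Rightarrow> 'a) \<Rightarrow> 'a set \<Rightarrow> 'a \<Rightarrow> bool" where
  "IVI_sol B C x \<longleftrightarrow> B x \<in> C \<and> (\<forall>y\<in>C. inner x (y - B x) \<ge> 0)"

definition strongly_monotone_couple :: "real \<Rightarrow> ('a::real_inner \<Rightarrow> 'a) \<Rightarrow> ('a \<Rightarrow> 'a) \<Rightarrow> bool" where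
  "strongly_monotone_couple \<gamma> A F \<longleftrightarrow>
     (\<forall>x y. inner (A x - A y) (F x - F y) \<ge> \<gamma> * (norm (x - y))\<^sup>2)"

end

theory Submission
  imports Defs
begin

lemma surj_lemma:
  fixes f :: "'a::euclidean_space \<Rightarrow> 'a"
  assumes cont: "continuous_on UNIV f" and c: "c > 0"
    and low: "\<And>x y. c * norm (x - y) \<le> norm (f x - f y)"
  shows "surj f"
proof -
  have inj: "inj f"
  proof (rule injI)
    fix x y assume "f x = f y"
    then have "c * norm (x - y) \<le> 0" using low[of x y] by simp
    then show "x = y" using c by (simp add: mult_le_0_iff)
  qed
  have op: "open (range f)"
    using invariance_of_domain[OF cont open_UNIV] inj by simp
  have cl: "closed (range f)"
    unfolding closed_sequential_limits
  proof (intro allI impI)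
    fix s l assume H: "(\<forall>n. s n \<in> range f) \<and> s \<longlonglongrightarrow> l"
    define y where "y n = inv f (s n)" for n
    have y: "s n = f (y n)" for n unfolding y_def using H by (simp add: f_inv_into_f)
    have "Cauchy s" using H by (intro LIMSEQ_imp_Cauchy) blast
    have "Cauchy y"
      unfolding Cauchy_def
    proof (intro allI impI)
      fix e :: real assume "e > 0"
      then obtain M where M: "\<forall>m\<ge>M. \<forall>n\<ge>M. dist (s m) (s n) < c * e"
        using \<open>Cauchy s\<close> c \<open>e > 0\<close> unfolding Cauchy_def by (meson mult_pos_pos)
      show "\<exists>M. \<forall>m\<ge>M. \<forall>n\<ge>M. dist (y m) (y n) < e"
      proof (intro exI allI impI)
        fix m n assume "m \<ge> M" "n \<ge> M"
        then have "c * norm (y m - y n) < c * e"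
          using M[rule_format, of m n] low[of "y m" "y n"] y[of m] y[of n] by (auto simp: dist_norm)
        then show "dist (y m) (y n) < e" using c by (simp add: dist_norm)
      qed
    qed
    then obtain z where z: "y \<longlonglongrightarrow> z" using Cauchy_convergent_iff convergent_def by blast
    have "(\<lambda>n. f (y n)) \<longlonglongrightarrow> f z"
      by (rule continuous_on_tendsto_compose[OF cont z]) auto
    moreover have "s = (\<lambda>n. f (y n))" using y by auto
    ultimately have "s \<longlonglongrightarrow> f z" by simp
    then have "l = f z" using H LIMSEQ_unique by blast
    then show "l \<in> range f" by simp
  qed
  have "range f \<noteq> {}" by simp
  then show ?thesis using clopen[of "range f"] op cl by simp
qed

lemma VI_exists:
  fixes G :: "'a::euclidean_space \<Rightarrow> 'a" and C :: "'a set"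
  assumes C: "C \<noteq> {}" "closed C" "convex C"
    and mu: "\<mu> > 0" and M: "M > 0" and muM: "\<mu> \<le> M"
    and mono: "\<And>u v. \<mu> * (norm (u - v))\<^sup>2 \<le> inner (G u - G v) (u - v)"
    and lip: "\<And>u v. norm (G u - G v) \<le> M * norm (u - v)"
  shows "\<exists>u. VI_sol G C u"
proof -
  define l where "l = \<mu> / M^2"
  define k where "k = 1 - \<mu>^2 / M^2"
  have l0: "l > 0" using mu M by (simp add: l_def)
  have k0: "0 \<le> k" using mu M muM by (simp add: k_def power_mono)
  have k1: "k < 1" using mu M by (simp add: k_def)
  define T where "T u = closest_point C (u - l *\<^sub>R G u)" for u
  have key: "norm ((u - v) - l *\<^sub>R (G u - G v)) \<le> sqrt k * norm (u - v)" for u v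
  proof -
    define a where "a = u - v"
    define g where "g = G u - G v"
    have e: "(norm (a - l *\<^sub>R g))^2 = (norm a)^2 - 2*l*inner g a + l^2 * (norm g)^2"
      unfolding power2_norm_eq_inner by (simp add: inner_diff_left inner_diff_right inner_commute power2_eq_square algebra_simps)
    have g1: "inner g a \<ge> \<mu> * (norm a)^2" using mono[of u v] by (simp add: a_def g_def)
    have g2: "(norm g)^2 \<le> M^2 * (norm a)^2"
    proof -
      have "norm g \<le> M * norm a" using lip[of u v] by (simp add: a_def g_def)
      then have "(norm g)^2 \<le> (M * norm a)^2" by (simp add: power_mono)
      then show ?thesis by (simp add: power_mult_distrib)
    qed
    have "(norm (a - l *\<^sub>R g))^2 \<le> (norm a)^2 - 2*l*(\<mu> * (norm a)^2) + l^2 * (M^2 * (norm a)^2)"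
      unfolding e using g1 g2 l0 by (smt (verit) mult_left_mono mult_nonneg_nonneg zero_le_power2)
    also have "\<dots> = k * (norm a)^2"
      using M by (simp add: l_def k_def field_simps power2_eq_square)
    also have "\<dots> = (sqrt k * norm a)^2" using k0 by (simp add: power_mult_distrib)
    finally have "(norm (a - l *\<^sub>R g))^2 \<le> (sqrt k * norm a)^2" .
    then have "norm (a - l *\<^sub>R g) \<le> sqrt k * norm a"
      by (rule power2_le_imp_le) (simp add: k0)
    then show ?thesis by (simp add: a_def g_def)
  qed
  have contr: "\<forall>x y. dist (T x) (T y) \<le> sqrt k * dist x y"
  proof (intro allI)
    fix x y
    have "dist (T x) (T y) \<le> dist (x - l *\<^sub>R G x) (y - l *\<^sub>R G y)"
      unfolding T_def by (rule closest_point_lipschitz[OF C(3) C(2) C(1)])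
    also have "\<dots> = norm ((x - y) - l *\<^sub>R (G x - G y))"
      by (simp add: dist_norm algebra_simps)
    also have "\<dots> \<le> sqrt k * dist x y" using key by (simp add: dist_norm)
    finally show "dist (T x) (T y) \<le> sqrt k * dist x y" .
  qed
  have "sqrt k < 1" using k0 k1 by simp
  then obtain u where u: "T u = u"
    using banach_fix_type[OF _ _ contr] k0 by auto
  have uC: "u \<in> C" using u closest_point_in_set[OF C(2) C(1)] unfolding T_def by metis
  have "inner (G u) (y - u) \<ge> 0" if "y \<in> C" for y
  proof -
    have "inner ((u - l *\<^sub>R G u) - u) (y - u) \<le> 0"
      using closest_point_dot[OF C(3) C(2) that, of "u - l *\<^sub>R G u"] u unfolding T_def by simp
    then have "- l * inner (G u) (y - u) \<le> 0" by (simp add: inner_diff_left)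
    then show ?thesis using l0 by (simp add: zero_le_mult_iff)
  qed
  then show ?thesis using uC unfolding VI_sol_def by blast
qed

lemma smc_swap: "strongly_monotone_couple g A F \<Longrightarrow> strongly_monotone_couple g F A"
  unfolding strongly_monotone_couple_def by (simp add: inner_commute)

lemma smc_low:
  fixes A F :: "'a::euclidean_space \<Rightarrow> 'a"
  assumes smc: "strongly_monotone_couple g A F" and lipA: "L-lipschitz_on UNIV A"
  shows "g * norm (x - y) \<le> L * norm (F x - F y)"
proof (cases "x = y")
  case True then show ?thesis using lipschitz_on_nonneg[OF lipA] by simp
next
  case False
  have L0: "L \<ge> 0" using lipschitz_on_nonneg[OF lipA] .
  have "g * (norm (x - y))^2 \<le> inner (A x - A y) (F x - F y)"
    using smc unfolding strongly_monotone_couple_def by blast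
  also have "\<dots> \<le> norm (A x - A y) * norm (F x - F y)" by (rule norm_cauchy_schwarz)
  also have "\<dots> \<le> (L * norm (x - y)) * norm (F x - F y)"
    using lipschitz_onD[OF lipA, of x y] by (simp add: dist_norm mult_right_mono)
  finally have "(g * norm (x - y)) * norm (x - y) \<le> (L * norm (F x - F y)) * norm (x - y)"
    by (simp add: power2_eq_square algebra_simps)
  then show ?thesis using False by (simp add: mult_le_cancel_right)
qed

lemma consts_ge:
  fixes A F :: "'a::euclidean_space \<Rightarrow> 'a"
  assumes smc: "strongly_monotone_couple g A F" and lipA: "LA-lipschitz_on UNIV A"
    and lipF: "LF-lipschitz_on UNIV F"
  shows "g \<le> LA * LF"
proof -
  obtain b :: 'a where b: "b \<in> Basis" using nonempty_Basis by blast
  have nb: "norm (b - 0) = 1" using b by simp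
  have "g * norm (b - 0) \<le> LA * norm (F b - F 0)" by (rule smc_low[OF smc lipA])
  also have "\<dots> \<le> LA * (LF * norm (b - 0))"
    using lipschitz_onD[OF lipF, of b 0] lipschitz_on_nonneg[OF lipA]
    by (simp add: dist_norm mult_left_mono)
  finally show ?thesis using nb by simp
qed

lemma inv_part:
  fixes A F :: "'a::euclidean_space \<Rightarrow> 'a"
  assumes smc: "strongly_monotone_couple g A F" and lipA: "LA-lipschitz_on UNIV A"
    and lipF: "LF-lipschitz_on UNIV F" and g: "g > 0"
  shows "bij F" "(LA / g)-lipschitz_on UNIV (inv F)"
    "\<And>u v. norm (u - v) / LF \<le> norm (inv F u - inv F v)"
    "\<And>u v. norm (inv F u - inv F v) \<le> LA / g * norm (u - v)"
proof -
  have ge: "g \<le> LA * LF" by (rule consts_ge[OF smc lipA lipF])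
  have LA0: "LA \<ge> 0" "LF \<ge> 0" using lipschitz_on_nonneg lipA lipF by blast+
  have LA: "LA > 0" using ge g LA0 by (metis less_eq_real_def mult_zero_left not_le)
  have low: "g / LA * norm (x - y) \<le> norm (F x - F y)" for x y
    using smc_low[OF smc lipA, of x y] LA by (simp add: field_simps)
  have inj: "inj F"
  proof (rule injI)
    fix x y assume "F x = F y"
    then have "g * norm (x - y) \<le> 0" using smc_low[OF smc lipA, of x y] by simp
    then show "x = y" using g by (simp add: mult_le_0_iff)
  qed
  have surj: "surj F"
    by (rule surj_lemma[OF lipschitz_on_continuous_on[OF lipF] _ low]) (use g LA in simp)
  show "bij F" using inj surj by (simp add: bij_def)
  have fi: "F (inv F u) = u" for u using surj by (simp add: surj_f_inv_f)
  show up: "norm (inv F u - inv F v) \<le> LA / g * norm (u - v)" for u v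
  proof -
    have "g * norm (inv F u - inv F v) \<le> LA * norm (u - v)"
      using smc_low[OF smc lipA, of "inv F u" "inv F v"] fi by simp
    then show ?thesis using g by (simp add: field_simps)
  qed
  show "norm (u - v) / LF \<le> norm (inv F u - inv F v)" for u v
  proof -
    have h: "norm (u - v) \<le> LF * norm (inv F u - inv F v)"
      using lipschitz_onD[OF lipF, of "inv F u" "inv F v"] fi by (simp add: dist_norm)
    show ?thesis
    proof (cases "LF = 0")
      case True then show ?thesis by simp
    next
      case False then have "LF > 0" using LA0 by simp
      then show ?thesis using h by (simp add: field_simps)
    qed
  qed
  show "(LA / g)-lipschitz_on UNIV (inv F)"
    by (rule lipschitz_onI) (use up LA0 g in \<open>auto simp: dist_norm\<close>)
qed

theorem theorem2p1:
  fixes A F :: "'a::euclidean_space \<Rightarrow> 'a" and C :: "'a set"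
    and L_A L_F \<gamma> :: real
  assumes "C \<noteq> {}" and "closed C" and "convex C"
    and "L_A-lipschitz_on UNIV A" and "L_F-lipschitz_on UNIV F"
    and "\<gamma> > 0" and "strongly_monotone_couple \<gamma> A F"
  shows "bij A \<and> bij F
    \<and> (\<exists>K. K-lipschitz_on UNIV (inv A)) \<and> (\<exists>K. K-lipschitz_on UNIV (inv F))
    \<and> (\<forall>u v. norm (u - v) / L_F \<le> norm (inv F u - inv F v)
              \<and> norm (inv F u - inv F v) \<le> L_A / \<gamma> * norm (u - v))
    \<and> (\<forall>u v. norm (u - v) / L_A \<le> norm (inv A u - inv A v)
              \<and> norm (inv A u - inv A v) \<le> L_F / \<gamma> * norm (u - v))
    \<and> (\<exists>!x. GVI_sol A F C x)
    \<and> (\<forall>x. GVI_sol A F C x \<longleftrightarrow> VI_sol (A \<circ> inv F) C (F x))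
    \<and> (\<forall>x. GVI_sol A F C x \<longleftrightarrow> IVI_sol (F \<circ> inv A) C (A x))"
proof -
  note C = assms(1-3)
  note lipA = assms(4) and lipF = assms(5) and g = assms(6) and smc = assms(7)
  note smc' = smc_swap[OF smc]
  note PF = inv_part[OF smc lipA lipF g]
  note PA = inv_part[OF smc' lipF lipA g]
  have bF: "bij F" and bA: "bij A" using PF PA by auto
  have Fi: "F (inv F u) = u" "inv F (F x) = x" for u x
    using bF by (auto simp: bij_def surj_f_inv_f inv_f_f)
  have Ai: "A (inv A u) = u" "inv A (A x) = x" for u x
    using bA by (auto simp: bij_def surj_f_inv_f inv_f_f)
  have ge: "\<gamma> \<le> L_A * L_F" by (rule consts_ge[OF smc lipA lipF])
  have L0: "L_A \<ge> 0" "L_F \<ge> 0" using lipschitz_on_nonneg lipA lipF by blast+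
  have LA: "L_A > 0" using ge g L0 by (metis less_eq_real_def mult_zero_left not_le)
  have LF: "L_F > 0" using ge g L0 by (metis less_eq_real_def mult_zero_right not_le)
  have eq1: "GVI_sol A F C x \<longleftrightarrow> VI_sol (A \<circ> inv F) C (F x)" for x
    unfolding GVI_sol_def VI_sol_def by (simp add: Fi)
  have eq2: "GVI_sol A F C x \<longleftrightarrow> IVI_sol (F \<circ> inv A) C (A x)" for x
    unfolding GVI_sol_def IVI_sol_def by (simp add: Ai)
  define G where "G = A \<circ> inv F"
  have "\<exists>u. VI_sol G C u"
  proof (rule VI_exists[OF C, where \<mu> = "\<gamma> / L_F^2" and M = "L_A^2 / \<gamma>"])
    show "0 < \<gamma> / L_F^2" using g LF by simp
    show "0 < L_A^2 / \<gamma>" using g LA by simp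
    have "\<gamma> * \<gamma> \<le> (L_A * L_F) * (L_A * L_F)" using ge g by (simp add: mult_mono)
    then show "\<gamma> / L_F^2 \<le> L_A^2 / \<gamma>" using g LF by (simp add: field_simps power2_eq_square)
    fix u v
    define x where "x = inv F u"
    define y where "y = inv F v"
    have ux: "u = F x" "v = F y" by (simp_all add: x_def y_def Fi)
    have d: "norm (u - v) / L_F \<le> norm (x - y)" using PF(3)[of u v] by (simp add: x_def y_def)
    have "\<gamma> / L_F^2 * (norm (u - v))^2 = \<gamma> * (norm (u - v) / L_F)^2"
      by (simp add: power_divide)
    also have "\<dots> \<le> \<gamma> * (norm (x - y))^2"
      using d g LF by (intro mult_left_mono power_mono) auto
    also have "\<dots> \<le> inner (A x - A y) (F x - F y)"
      using smc unfolding strongly_monotone_couple_def by blast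
    finally show "\<gamma> / L_F^2 * (norm (u - v))^2 \<le> inner (G u - G v) (u - v)"
      by (simp add: G_def x_def y_def Fi)
    have "norm (A x - A y) \<le> L_A * norm (x - y)"
      using lipschitz_onD[OF lipA, of x y] by (simp add: dist_norm)
    also have "\<dots> \<le> L_A * (L_A / \<gamma> * norm (u - v))"
      using PF(4)[of u v] L0 unfolding x_def y_def by (rule_tac mult_left_mono) auto
    finally show "norm (G u - G v) \<le> L_A^2 / \<gamma> * norm (u - v)"
      by (simp add: G_def x_def y_def power2_eq_square)
  qed
  then obtain u where u: "VI_sol G C u" by blast
  have ex: "GVI_sol A F C (inv F u)" using eq1[of "inv F u"] u by (simp add: Fi G_def)
  have uniq: "x = x'" if "GVI_sol A F C x" "GVI_sol A F C x'" for x x'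
  proof -
    have "inner (A x) (F x' - F x) \<ge> 0" "inner (A x') (F x - F x') \<ge> 0"
      using that unfolding GVI_sol_def by auto
    then have "inner (A x - A x') (F x - F x') \<le> 0"
      by (simp add: inner_diff_left inner_diff_right)
    moreover have "\<gamma> * (norm (x - x'))^2 \<le> inner (A x - A x') (F x - F x')"
      using smc unfolding strongly_monotone_couple_def by blast
    ultimately have "\<gamma> * (norm (x - x'))^2 \<le> 0" by linarith
    then show ?thesis using g by (simp add: mult_le_0_iff)
  qed
  have "\<exists>!x. GVI_sol A F C x" using ex uniq by blast
  then show ?thesis using bA bF PA PF eq1 eq2 by blast
qed

end
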